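(* Let $N=((V\cup\{s\},A),\tau)$ be an acyclic pre-flow temporal network and $k\in\mathbb{N}$. Then $\min\{k,\lambda_N(s,v)\}=\min\{k,d^-_A(v)\}$ for every $v\in V$, and there exist $k$ pairwise arc-disjoint $\tau$-respecting $s$-arborescences such that each $v\in V$ belongs to exactly $\min\{k,\lambda_N(s,v)\}$ of them.
   Context: A temporal network is a pair $N=(D,\tau)$ where $D=(V\cup\{s\},A)$ is a directed graph (parallel arcs allowed) with a root $s$ that no arc enters, and $\tau:A\to\mathbb{N}$; it is acyclic if $D$ has no directed cycle. For $i\in\mathbb{N}$, $\rho_N^i(v)=\{a \text{ entering } v:\tau(a)\le i\}$, $\delta_N^i(v)=\{a\text{ leaving } v:\tau(a)\le i\}$. $N$ is pre-flow if $|\rho_N^i(v)|\ge|\delta_N^i(v)|$ for all $i\in\mathbb{N}$ and all $v\in V$. $d^-_A(v)$ is the number of arcs entering $v$. A directed path with arcs $a_1,\dots,a_\ell$ in order is $\tau$-respecting if $\tau(a_1)\le\dots\le\tau(a_\ell)$; $\lambda_N(s,v)$ is the maximum number of pairwise arc-disjoint $\tau$-respecting $(s,v)$-paths. An $s$-arborescence is an acyclic subgraph $F=(V'\cup\{s\},A')$, $V'\subseteq V$, in which each vertex of $V'$ has in-degree exactly $1$; it is $\tau$-respecting if every path in it from $s$ is $\tau$-respecting. *)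

theory Defs
  imports Main
begin

(* Arcs have an abstract type 'e (so parallel arcs are allowed); src/trg give
   tail and head of an arc; vertices have type 'v. *)

definition is_walk :: "('e \<Rightarrow> 'v) \<Rightarrow> ('e \<Rightarrow> 'v) \<Rightarrow> 'e list \<Rightarrow> bool" where
  "is_walk src trg p \<longleftrightarrow> (\<forall>i. Suc i < length p \<longrightarrow> trg (p ! i) = src (p ! Suc i))"

definition is_path :: "('e \<Rightarrow> 'v) \<Rightarrow> ('e \<Rightarrow> 'v) \<Rightarrow> 'e set \<Rightarrow> 'v \<Rightarrow> 'v \<Rightarrow> 'e list \<Rightarrow> bool" where
  "is_path src trg B u w p \<longleftrightarrow>
     p \<noteq> [] \<and> set p \<subseteq> B \<and> is_walk src trg p \<and>
     src (hd p) = u \<and> trg (last p) = w \<and>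
     distinct (map src p @ [trg (last p)])"

definition tau_respecting :: "('e \<Rightarrow> nat) \<Rightarrow> 'e list \<Rightarrow> bool" where
  "tau_respecting \<tau> p \<longleftrightarrow> sorted (map \<tau> p)"

definition acyclic_arcs :: "('e \<Rightarrow> 'v) \<Rightarrow> ('e \<Rightarrow> 'v) \<Rightarrow> 'e set \<Rightarrow> bool" where
  "acyclic_arcs src trg B \<longleftrightarrow>
     \<not> (\<exists>p. p \<noteq> [] \<and> set p \<subseteq> B \<and> is_walk src trg p \<and> src (hd p) = trg (last p))"

(* N = ((V \<union> {s}, A), \<tau>) is a (finite) temporal network with root s that no arc enters *)
definition temporal_network :: "'v set \<Rightarrow> 'v \<Rightarrow> 'e set \<Rightarrow> ('e \<Rightarrow> 'v) \<Rightarrow> ('e \<Rightarrow> 'v) \<Rightarrow> bool" where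
  "temporal_network V s A src trg \<longleftrightarrow>
     finite V \<and> finite A \<and> s \<notin> V \<and>
     (\<forall>a\<in>A. src a \<in> V \<union> {s} \<and> trg a \<in> V)"

definition rho :: "'e set \<Rightarrow> ('e \<Rightarrow> 'v) \<Rightarrow> ('e \<Rightarrow> nat) \<Rightarrow> nat \<Rightarrow> 'v \<Rightarrow> 'e set" where
  "rho A trg \<tau> i v = {a\<in>A. trg a = v \<and> \<tau> a \<le> i}"

definition delta :: "'e set \<Rightarrow> ('e \<Rightarrow> 'v) \<Rightarrow> ('e \<Rightarrow> nat) \<Rightarrow> nat \<Rightarrow> 'v \<Rightarrow> 'e set" where
  "delta A src \<tau> i v = {a\<in>A. src a = v \<and> \<tau> a \<le> i}"

definition pre_flow :: "'v set \<Rightarrow> 'e set \<Rightarrow> ('e \<Rightarrow> 'v) \<Rightarrow> ('e \<Rightarrow> 'v) \<Rightarrow> ('e \<Rightarrow> nat) \<Rightarrow> bool" where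
  "pre_flow V A src trg \<tau> \<longleftrightarrow>
     (\<forall>i. \<forall>v\<in>V. card (rho A trg \<tau> i v) \<ge> card (delta A src \<tau> i v))"

definition in_degree :: "'e set \<Rightarrow> ('e \<Rightarrow> 'v) \<Rightarrow> 'v \<Rightarrow> nat" where
  "in_degree A trg v = card {a\<in>A. trg a = v}"

definition lambda_N :: "'e set \<Rightarrow> ('e \<Rightarrow> 'v) \<Rightarrow> ('e \<Rightarrow> 'v) \<Rightarrow> ('e \<Rightarrow> nat) \<Rightarrow> 'v \<Rightarrow> 'v \<Rightarrow> nat" where
  "lambda_N A src trg \<tau> s v = Max {k. \<exists>P :: nat \<Rightarrow> 'e list.
       (\<forall>i<k. is_path src trg A s v (P i) \<and> tau_respecting \<tau> (P i)) \<and>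
       (\<forall>i<k. \<forall>j<k. i \<noteq> j \<longrightarrow> set (P i) \<inter> set (P j) = {})}"

definition s_arborescence ::
  "'v set \<Rightarrow> 'v \<Rightarrow> 'e set \<Rightarrow> ('e \<Rightarrow> 'v) \<Rightarrow> ('e \<Rightarrow> 'v) \<Rightarrow> 'v set \<Rightarrow> 'e set \<Rightarrow> bool" where
  "s_arborescence V s A src trg V' A' \<longleftrightarrow>
     V' \<subseteq> V \<and> A' \<subseteq> A \<and>
     (\<forall>a\<in>A'. src a \<in> V' \<union> {s} \<and> trg a \<in> V' \<union> {s}) \<and>
     acyclic_arcs src trg A' \<and>
     (\<forall>v\<in>V'. card {a\<in>A'. trg a = v} = 1)"

definition tau_respecting_arb ::
  "'v \<Rightarrow> ('e \<Rightarrow> 'v) \<Rightarrow> ('e \<Rightarrow> 'v) \<Rightarrow> ('e \<Rightarrow> nat) \<Rightarrow> 'v set \<Rightarrow> 'e set \<Rightarrow> bool" where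
  "tau_respecting_arb s src trg \<tau> V' A' \<longleftrightarrow>
     (\<forall>w p. is_path src trg A' s w p \<longrightarrow> tau_respecting \<tau> p)"

end

theory Submission imports Defs begin

lemma matching:
  fixes f :: "'a \<Rightarrow> nat" and g :: "'b \<Rightarrow> nat"
  assumes "finite X"
  shows "\<forall>Y. finite Y \<longrightarrow> (\<forall>i. card {x\<in>X. f x \<le> i} \<le> card {y\<in>Y. g y \<le> i}) \<longrightarrow>
     (\<exists>\<mu>. inj_on \<mu> X \<and> \<mu> ` X \<subseteq> Y \<and> (\<forall>x\<in>X. g (\<mu> x) \<le> f x))"
  using assms
proof (induction X rule: finite_ranking_induct[where f = f])
  case empty
  then show ?case by auto
next
  case (insert x S)
  show ?case
  proof (cases "x \<in> S")
    case True
    then show ?thesis using insert by (simp add: insert_absorb)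
  next
    case xS: False
    show ?thesis
    proof (intro allI impI)
      fix Y :: "'b set"
      assume fY: "finite Y" and C: "\<forall>i. card {x'\<in>insert x S. f x' \<le> i} \<le> card {y\<in>Y. g y \<le> i}"
      let ?X = "insert x S"
      have allle: "{x'\<in>?X. f x' \<le> f x} = ?X" using insert.hyps(2) by auto
      have cX: "card ?X = Suc (card S)" using xS insert.hyps(1) by simp
      have "card {y\<in>Y. g y \<le> f x} \<ge> Suc (card S)" using C[rule_format, of "f x"] allle cX by simp
      then have ne: "{y\<in>Y. g y \<le> f x} \<noteq> {}" by (metis card.empty not_less_eq_eq zero_le)
      define m where "m = Max (g ` {y\<in>Y. g y \<le> f x})"
      have "m \<in> g ` {y\<in>Y. g y \<le> f x}" unfolding m_def using ne fY by (intro Max_in) auto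
      then obtain y0 where y0: "y0 \<in> Y" "g y0 \<le> f x" "g y0 = m" by auto
      have mmax: "g y \<le> m" if "y \<in> Y" "g y \<le> f x" for y
        unfolding m_def using that fY by (intro Max_ge) auto
      define Y' where "Y' = Y - {y0}"
      have C': "card {x'\<in>S. f x' \<le> i} \<le> card {y\<in>Y'. g y \<le> i}" for i
      proof (cases "i < g y0")
        case True
        have "{y\<in>Y'. g y \<le> i} = {y\<in>Y. g y \<le> i}" using True unfolding Y'_def by auto
        then have e: "card {y\<in>Y'. g y \<le> i} = card {y\<in>Y. g y \<le> i}" by simp
        have "card {x'\<in>S. f x' \<le> i} \<le> card {x'\<in>?X. f x' \<le> i}"
          using insert.hyps(1) by (intro card_mono) auto
        then show ?thesis using C[rule_format, of i] e by linarith
      next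
        case False
        have eqY: "{y\<in>Y'. g y \<le> i} = {y\<in>Y. g y \<le> i} - {y0}" unfolding Y'_def by auto
        have "y0 \<in> {y\<in>Y. g y \<le> i}" using False y0 by auto
        then have cY: "card {y\<in>Y'. g y \<le> i} = card {y\<in>Y. g y \<le> i} - 1"
          unfolding eqY using fY by (simp add: card_Diff_singleton)
        show ?thesis
        proof (cases "f x \<le> i")
          case True
          have "{x'\<in>?X. f x' \<le> i} = insert x {x'\<in>S. f x' \<le> i}" using True by auto
          then have "card {x'\<in>?X. f x' \<le> i} = Suc (card {x'\<in>S. f x' \<le> i})"
            using xS insert.hyps(1) by simp
          then show ?thesis using cY C[rule_format, of i] by simp
        next
          case False2: False
          have "{y\<in>Y. g y \<le> f x} \<subseteq> {y\<in>Y. g y \<le> i}" using mmax y0 False by fastforce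
          then have "card {y\<in>Y. g y \<le> f x} \<le> card {y\<in>Y. g y \<le> i}" using fY by (intro card_mono) auto
          moreover have "card {x'\<in>S. f x' \<le> i} \<le> card S" using insert.hyps(1) by (intro card_mono) auto
          ultimately show ?thesis using cY \<open>card {y\<in>Y. g y \<le> f x} \<ge> Suc (card S)\<close> by simp
        qed
      qed
      have "finite Y'" using fY unfolding Y'_def by simp
      then obtain \<mu> where mu: "inj_on \<mu> S" "\<mu> ` S \<subseteq> Y'" "\<forall>x\<in>S. g (\<mu> x) \<le> f x"
        using insert.IH C' by blast
      define \<nu> where "\<nu> = \<mu>(x := y0)"
      have "\<nu> ` S = \<mu> ` S" unfolding \<nu>_def using xS by (auto intro: image_cong)
      then have "y0 \<notin> \<nu> ` S" using mu(2) unfolding Y'_def by auto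
      moreover have "inj_on \<nu> S" using mu(1) xS unfolding \<nu>_def inj_on_def by auto
      moreover have "\<nu> x = y0" by (simp add: \<nu>_def)
      ultimately have "inj_on \<nu> ?X" using xS by simp
      moreover have "\<nu> ` ?X \<subseteq> Y" using mu(2) y0 \<open>\<nu> ` S = \<mu> ` S\<close> unfolding Y'_def by (auto simp: \<nu>_def)
      moreover have "\<forall>x'\<in>?X. g (\<nu> x') \<le> f x'" using mu(3) y0 xS by (auto simp: \<nu>_def)
      ultimately show "\<exists>\<mu>. inj_on \<mu> ?X \<and> \<mu> ` ?X \<subseteq> Y \<and> (\<forall>x\<in>?X. g (\<mu> x) \<le> f x)" by blast
    qed
  qed
qed


lemma walk_sub:
  assumes "is_walk src trg p"
  shows "is_walk src trg (take n (drop i p))"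
  using assms unfolding is_walk_def by (auto simp: nth_take nth_drop add.commute)

lemma walk_Cons:
  "is_walk src trg (a # p) \<longleftrightarrow> (p \<noteq> [] \<longrightarrow> trg a = src (hd p)) \<and> is_walk src trg p"
  unfolding is_walk_def
  apply (cases p)
   apply simp
  apply (auto simp: nth_Cons split: nat.splits)
  done

lemma walk_snoc:
  assumes "is_walk src trg p" "p \<noteq> []" "trg (last p) = src a"
  shows "is_walk src trg (p @ [a])"
  unfolding is_walk_def
proof (intro allI impI)
  fix i assume i: "Suc i < length (p @ [a])"
  show "trg ((p @ [a]) ! i) = src ((p @ [a]) ! Suc i)"
  proof (cases "Suc i < length p")
    case True then show ?thesis using assms(1) unfolding is_walk_def by (simp add: nth_append)
  next
    case False
    then have "Suc i = length p" using i by simp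
    then have "i = length p - 1" by simp
    then show ?thesis using assms(2,3) by (simp add: nth_append last_conv_nth)
  qed
qed

lemma acyclic_mono: "acyclic_arcs src trg A \<Longrightarrow> B \<subseteq> A \<Longrightarrow> acyclic_arcs src trg B"
  unfolding acyclic_arcs_def by blast

lemma acyclic_distinct:
  assumes ac: "acyclic_arcs src trg F" and w: "is_walk src trg p" and ne: "p \<noteq> []"
    and sub: "set p \<subseteq> F"
  shows "distinct (map src p @ [trg (last p)])"
proof -
  define xs where "xs = map src p @ [trg (last p)]"
  have len: "length xs = Suc (length p)" by (simp add: xs_def)
  have xs_lt: "xs ! i = src (p ! i)" if "i < length p" for i
    using that by (simp add: xs_def nth_append)
  have xs_trg: "xs ! j = trg (p ! (j - 1))" if "0 < j" "j \<le> length p" for j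
  proof (cases "j < length p")
    case True
    then have "xs ! j = src (p ! j)" by (rule xs_lt)
    also have "\<dots> = trg (p ! (j - 1))" using w True that unfolding is_walk_def
      by (metis Suc_pred')
    finally show ?thesis .
  next
    case False
    then have "j = length p" using that by simp
    then show ?thesis using ne by (simp add: xs_def nth_append last_conv_nth)
  qed
  have "xs ! i \<noteq> xs ! j" if ij: "i < j" "j < length xs" for i j
  proof
    assume eq: "xs ! i = xs ! j"
    define q where "q = take (j - i) (drop i p)"
    have jl: "j \<le> length p" using ij len by simp
    have lq: "length q = j - i" using ij jl by (simp add: q_def)
    have qne: "q \<noteq> []" using lq ij by auto
    have "set q \<subseteq> F" using sub unfolding q_def by (meson order_trans set_drop_subset set_take_subset)
    moreover have "is_walk src trg q" unfolding q_def by (rule walk_sub[OF w])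
    moreover have "src (hd q) = xs ! i"
      using ij jl by (simp add: q_def hd_conv_nth qne xs_lt hd_drop_conv_nth)
    moreover have "trg (last q) = xs ! j"
    proof -
      have "last q = q ! (j - i - 1)" using qne lq by (simp add: last_conv_nth)
      also have "\<dots> = p ! (j - 1)" using ij jl by (simp add: q_def nth_take nth_drop)
      finally show ?thesis using xs_trg[of j] ij jl by simp
    qed
    ultimately show False using ac eq qne unfolding acyclic_arcs_def by metis
  qed
  then show ?thesis unfolding xs_def[symmetric] distinct_conv_nth
    by (metis linorder_neqE_nat)
qed

lemma walk_is_path:
  assumes "acyclic_arcs src trg F" "is_walk src trg p" "p \<noteq> []" "set p \<subseteq> F"
  shows "is_path src trg F (src (hd p)) (trg (last p)) p"
  using acyclic_distinct[OF assms] assms unfolding is_path_def by simp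

lemma W_empty:
  assumes fin: "finite W" and ac: "acyclic_arcs src trg F"
    and step: "\<forall>w\<in>W. \<exists>a\<in>F. trg a = w \<and> src a \<in> W"
  shows "W = {}"
proof (rule ccontr)
  assume "W \<noteq> {}"
  then obtain w0 where w0: "w0 \<in> W" by auto
  have "\<exists>p. length p = Suc n \<and> set p \<subseteq> F \<and> is_walk src trg p \<and> set (map src p) \<subseteq> W" for n
  proof (induction n)
    case 0
    from step w0 obtain a where "a \<in> F" "src a \<in> W" by blast
    then show ?case by (intro exI[of _ "[a]"]) (simp add: is_walk_def)
  next
    case (Suc n)
    then obtain p where p: "length p = Suc n" "set p \<subseteq> F" "is_walk src trg p" "set (map src p) \<subseteq> W"
      by blast
    then have "src (hd p) \<in> W" by (cases p) auto
    with step obtain a where a: "a \<in> F" "trg a = src (hd p)" "src a \<in> W" by blast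
    have "is_walk src trg (a # p)" using p a by (simp add: walk_Cons)
    then show ?case using p a by (intro exI[of _ "a # p"]) simp
  qed
  then obtain p where p: "length p = Suc (card W)" "set p \<subseteq> F" "is_walk src trg p" "set (map src p) \<subseteq> W"
    by blast
  have "p \<noteq> []" using p by auto
  then have "distinct (map src p)" using acyclic_distinct[OF ac p(3) _ p(2)] by simp
  then have "card (set (map src p)) = Suc (card W)" using p distinct_card[of "map src p"] by (simp del: set_map)
  moreover have "card (set (map src p)) \<le> card W" using p fin by (simp add: card_mono)
  ultimately show False by simp
qed


definition good where
  "good V s A src trg (\<tau>::'e\<Rightarrow>nat) V' F \<longleftrightarrow> V' \<subseteq> V \<and> F \<subseteq> A \<and>
     (\<forall>a\<in>F. src a \<in> V' \<union> {s} \<and> trg a \<in> V' \<union> {s}) \<and>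
     (\<forall>w\<in>V'. card {a\<in>F. trg a = w} = 1) \<and>
     (\<forall>a\<in>F. \<forall>b\<in>F. trg a = src b \<longrightarrow> \<tau> a \<le> \<tau> b)"

lemma card1_obtain: "card {a\<in>F. trg a = w} = 1 \<Longrightarrow> \<exists>a\<in>F. trg a = w"
  by (metis (mono_tags, lifting) One_nat_def card_1_singletonE insertI1 mem_Collect_eq)

lemma good_path:
  assumes ac: "acyclic_arcs src trg A" and g: "good V s A src trg \<tau> V' F" and fin: "finite V"
    and w: "w \<in> V'"
  shows "\<exists>p. is_path src trg F s w p"
proof -
  have V'V: "V' \<subseteq> V" using g unfolding good_def by (elim conjE)
  have FA: "F \<subseteq> A" using g unfolding good_def by (elim conjE)
  have en: "\<forall>a\<in>F. src a \<in> V' \<union> {s} \<and> trg a \<in> V' \<union> {s}" using g unfolding good_def by (elim conjE)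
  have uq: "\<forall>w\<in>V'. card {a\<in>F. trg a = w} = 1" using g unfolding good_def by (elim conjE)
  have acF: "acyclic_arcs src trg F" using ac FA by (rule acyclic_mono)
  define W where "W = {w\<in>V'. \<not> (\<exists>p. is_path src trg F s w p)}"
  have "W \<subseteq> V" using V'V unfolding W_def by blast
  then have "finite W" using fin by (rule finite_subset)
  moreover have "\<forall>w\<in>W. \<exists>a\<in>F. trg a = w \<and> src a \<in> W"
  proof
    fix x assume x: "x \<in> W"
    then have xV: "x \<in> V'" unfolding W_def by blast
    have "card {a\<in>F. trg a = x} = 1" using uq xV by (rule bspec)
    then have "\<exists>a\<in>F. trg a = x" by (rule card1_obtain)
    then obtain a where a: "a \<in> F" "trg a = x" by (elim bexE)
    then have sa: "src a \<in> V' \<union> {s}" using en by blast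
    have "src a \<in> W"
    proof (cases "src a = s")
      case True
      have "is_walk src trg [a]" by (simp add: is_walk_def)
      then have "is_path src trg F (src (hd [a])) (trg (last [a])) [a]"
        using walk_is_path[OF acF, of "[a]"] a by simp
      then have "is_path src trg F s x [a]" using a True by simp
      then show ?thesis using x unfolding W_def by blast
    next
      case False
      then have "src a \<in> V'" using sa by simp
      show ?thesis
      proof (rule ccontr)
        assume "src a \<notin> W"
        then obtain p where p: "is_path src trg F s (src a) p" using \<open>src a \<in> V'\<close> unfolding W_def by blast
        then have pw: "is_walk src trg p" "p \<noteq> []" "trg (last p) = src a" "set p \<subseteq> F" "src (hd p) = s"
          unfolding is_path_def by auto
        then have "is_walk src trg (p @ [a])" by (intro walk_snoc)
        moreover have "set (p @ [a]) \<subseteq> F" using pw a by simp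
        ultimately have "is_path src trg F (src (hd (p @ [a]))) (trg (last (p @ [a]))) (p @ [a])"
          by (intro walk_is_path[OF acF]) simp_all
        then have "is_path src trg F s x (p @ [a])" using pw a by simp
        then show False using x unfolding W_def by blast
      qed
    qed
    then show "\<exists>a\<in>F. trg a = x \<and> src a \<in> W" using a by blast
  qed
  ultimately have "W = {}" using W_empty acF by blast
  then show ?thesis using w unfolding W_def by blast
qed

lemma good_sorted:
  assumes g: "good V s A src trg \<tau> V' F" and p: "is_path src trg F u w p"
  shows "tau_respecting \<tau> p"
  unfolding tau_respecting_def sorted_iff_nth_Suc
proof (intro allI impI)
  fix i assume i: "Suc i < length (map \<tau> p)"
  then have "p ! i \<in> F" "p ! Suc i \<in> F" using p unfolding is_path_def by auto
  moreover have "trg (p ! i) = src (p ! Suc i)" using p i unfolding is_path_def is_walk_def by simp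
  ultimately show "map \<tau> p ! i \<le> map \<tau> p ! Suc i" using g i unfolding good_def by simp
qed

lemma good_arb:
  assumes ac: "acyclic_arcs src trg A" and g: "good V s A src trg \<tau> V' F"
  shows "s_arborescence V s A src trg V' F \<and> tau_respecting_arb s src trg \<tau> V' F"
  using g acyclic_mono[OF ac] good_sorted[OF g]
  unfolding s_arborescence_def tau_respecting_arb_def good_def by blast


lemma lift_a:
  assumes g: "good (V - {v}) s (A - {a\<in>A. trg a = v}) (\<lambda>b. if src b = v then s else src b) trg \<tau> Vj Fj"
    and trgV: "\<forall>a\<in>A. trg a \<in> V" and sV: "s \<notin> V" and vV: "v \<in> V"
    and noout: "{b\<in>A. src b = v} \<inter> Fj = {}"
  shows "good V s A src trg \<tau> Vj Fj"
proof -
  have sF: "src a = (if src a = v then s else src a)" if "a \<in> Fj" for a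
    using noout that g unfolding good_def by auto
  show ?thesis using g sF trgV sV vV unfolding good_def
    apply (intro conjI)
        apply blast
       apply blast
      apply (metis (no_types, lifting))
     apply blast
    apply (metis (no_types, lifting) subsetD)
    done
qed

lemma lift_b:
  assumes g: "good (V - {v}) s (A - {a\<in>A. trg a = v}) (\<lambda>b. if src b = v then s else src b) trg \<tau> Vj Fj"
    and trgV: "\<forall>a\<in>A. trg a \<in> V" and sV: "s \<notin> V" and vV: "v \<in> V"
    and a0: "a0 \<in> A" "trg a0 = v" "src a0 = s"
    and tle: "\<forall>b\<in>{b\<in>A. src b = v} \<inter> Fj. \<tau> a0 \<le> \<tau> b"
  shows "good V s A src trg \<tau> (insert v Vj) (insert a0 Fj)"
proof -
  have VjV: "Vj \<subseteq> V - {v}" and FjA: "Fj \<subseteq> A - {a\<in>A. trg a = v}" using g unfolding good_def by auto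
  have ends: "src a \<in> insert v Vj \<union> {s} \<and> trg a \<in> insert v Vj \<union> {s}" if "a \<in> insert a0 Fj" for a
  proof (cases "a = a0")
    case True then show ?thesis using a0 by simp
  next
    case False
    then have aF: "a \<in> Fj" using that by simp
    then have "(if src a = v then s else src a) \<in> Vj \<union> {s}" "trg a \<in> Vj \<union> {s}"
      using g unfolding good_def by auto
    then show ?thesis by (auto split: if_splits)
  qed
  have uniq: "card {a\<in>insert a0 Fj. trg a = w} = 1" if "w \<in> insert v Vj" for w
  proof (cases "w = v")
    case True
    have "{a\<in>insert a0 Fj. trg a = w} = {a0}" using True a0 FjA by auto
    then show ?thesis by simp
  next
    case False
    then have wV: "w \<in> Vj" using that by simp
    have "{a\<in>insert a0 Fj. trg a = w} = {a\<in>Fj. trg a = w}" using False a0 by auto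
    then show ?thesis using g wV unfolding good_def by simp
  qed
  have loc: "\<tau> a \<le> \<tau> b" if "a \<in> insert a0 Fj" "b \<in> insert a0 Fj" "trg a = src b" for a b
  proof -
    have trgA: "trg a \<in> V" using that(1) a0 FjA trgV by auto
    have "b \<noteq> a0" using that(3) trgA a0 sV by auto
    then have bF: "b \<in> Fj" using that(2) by simp
    show ?thesis
    proof (cases "a = a0")
      case True
      then show ?thesis using tle bF FjA that(3) a0 by auto
    next
      case False
      then have aF: "a \<in> Fj" using that(1) by simp
      then have "trg a \<noteq> v" using FjA by auto
      then have "trg a = (if src b = v then s else src b)" using that(3) by simp
      then show ?thesis using g aF bF unfolding good_def by blast
    qed
  qed
  show ?thesis unfolding good_def
    using VjV FjA vV a0 ends uniq loc by auto
qed


lemma exists_min: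
  fixes \<tau> :: "'e \<Rightarrow> nat"
  assumes "finite S" "S \<noteq> {}"
  shows "\<exists>b\<in>S. \<forall>b'\<in>S. \<tau> b \<le> \<tau> b'"
proof -
  have "Min (\<tau> ` S) \<in> \<tau> ` S" using assms by simp
  then obtain b where "b \<in> S" "\<tau> b = Min (\<tau> ` S)" by auto
  then show ?thesis using assms by (intro bexI[of _ b]) (auto intro: Min_le)
qed

lemma core:
  assumes "card V = n" "temporal_network V s A src trg" "acyclic_arcs src trg A" "pre_flow V A src trg \<tau>"
  shows "\<exists>Vs As. (\<forall>i<k. good V s A src trg \<tau> (Vs i) (As i)) \<and>
     (\<forall>i<k. \<forall>j<k. i \<noteq> j \<longrightarrow> As i \<inter> As j = {}) \<and>
     (\<forall>v\<in>V. card {i. i < k \<and> v \<in> Vs i} = min k (in_degree A trg v))"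
  using assms
proof (induction n arbitrary: V A src)
  case 0
  then have "V = {}" unfolding temporal_network_def by auto
  then have "A = {}" using 0 unfolding temporal_network_def by auto
  have "good V s A src trg \<tau> {} {}" unfolding good_def by simp
  then show ?case using \<open>V = {}\<close> by (intro exI[of _ "\<lambda>_. {}"]) simp
next
  case (Suc n)
  note tn = Suc.prems(2) and ac = Suc.prems(3) and pf = Suc.prems(4)
  have finV: "finite V" and finA: "finite A" and sV: "s \<notin> V"
    and ends: "\<forall>a\<in>A. src a \<in> V \<union> {s} \<and> trg a \<in> V" using tn unfolding temporal_network_def by auto
  have "V \<noteq> {}" using Suc.prems(1) by auto
  then have "\<not> (\<forall>w\<in>V. \<exists>a\<in>A. trg a = w \<and> src a \<in> V)" using W_empty[OF finV ac] by blast
  then obtain v where vV: "v \<in> V" and vsrc: "\<forall>a\<in>A. trg a = v \<longrightarrow> src a = s" using ends by blast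
  define src' where "src' = (\<lambda>b. if src b = v then s else src b)"
  define In where "In = {a\<in>A. trg a = v}"
  define Out where "Out = {b\<in>A. src b = v}"
  define A' where "A' = A - In"
  define V' where "V' = V - {v}"
  have src'V: "src b = src' b" if "src' b \<in> V" for b
    using that sV unfolding src'_def by (auto split: if_splits)
  have cV': "card V' = n" using Suc.prems(1) vV finV unfolding V'_def by simp
  have tn': "temporal_network V' s A' src' trg"
    using finV finA sV ends unfolding temporal_network_def V'_def A'_def src'_def In_def by auto
  have ac': "acyclic_arcs src' trg A'"
    unfolding acyclic_arcs_def
  proof
    assume "\<exists>p. p \<noteq> [] \<and> set p \<subseteq> A' \<and> is_walk src' trg p \<and> src' (hd p) = trg (last p)"
    then obtain p where p: "p \<noteq> []" "set p \<subseteq> A'" "is_walk src' trg p" "src' (hd p) = trg (last p)" by blast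
    have pA: "set p \<subseteq> A" using p(2) unfolding A'_def by auto
    have "is_walk src trg p" unfolding is_walk_def
    proof (intro allI impI)
      fix i assume i: "Suc i < length p"
      then have "trg (p ! i) = src' (p ! Suc i)" using p(3) unfolding is_walk_def by simp
      moreover have "trg (p ! i) \<in> V" using i pA ends by (meson Suc_lessD nth_mem subsetD)
      ultimately show "trg (p ! i) = src (p ! Suc i)" using src'V by metis
    qed
    moreover have "trg (last p) \<in> V" using p(1) pA ends by (meson last_in_set subsetD)
    then have "src (hd p) = trg (last p)" using p(4) src'V by metis
    ultimately show False using ac p(1) pA unfolding acyclic_arcs_def by blast
  qed
  have pf': "pre_flow V' A' src' trg \<tau>"
    unfolding pre_flow_def
  proof (intro allI ballI)
    fix i w assume w: "w \<in> V'"
    have "rho A' trg \<tau> i w = rho A trg \<tau> i w" using w unfolding rho_def A'_def In_def V'_def by auto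
    moreover have "delta A' src' \<tau> i w \<subseteq> delta A src \<tau> i w"
      using w sV unfolding delta_def A'_def V'_def src'_def by auto
    then have "card (delta A' src' \<tau> i w) \<le> card (delta A src \<tau> i w)"
      using finA by (intro card_mono) (auto simp: delta_def)
    moreover have "card (delta A src \<tau> i w) \<le> card (rho A trg \<tau> i w)"
      using pf w unfolding pre_flow_def V'_def by auto
    ultimately show "card (delta A' src' \<tau> i w) \<le> card (rho A' trg \<tau> i w)" by simp
  qed
  obtain Vs' As' where IH1: "\<forall>i<k. good V' s A' src' trg \<tau> (Vs' i) (As' i)"
    and IH2: "\<forall>i<k. \<forall>j<k. i \<noteq> j \<longrightarrow> As' i \<inter> As' j = {}"
    and IH3: "\<forall>w\<in>V'. card {i. i < k \<and> w \<in> Vs' i} = min k (in_degree A' trg w)"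
    using Suc.IH[OF cV' tn' ac' pf'] by blast
  have finIn: "finite In" and finOut: "finite Out" using finA unfolding In_def Out_def by auto
  have "\<forall>i. card {x\<in>Out. \<tau> x \<le> i} \<le> card {y\<in>In. \<tau> y \<le> i}"
  proof
    fix i
    have "{x\<in>Out. \<tau> x \<le> i} = delta A src \<tau> i v" unfolding Out_def delta_def by auto
    moreover have "{y\<in>In. \<tau> y \<le> i} = rho A trg \<tau> i v" unfolding In_def rho_def by auto
    ultimately show "card {x\<in>Out. \<tau> x \<le> i} \<le> card {y\<in>In. \<tau> y \<le> i}"
      using pf vV unfolding pre_flow_def by simp
  qed
  then obtain \<mu> where mu: "inj_on \<mu> Out" "\<mu> ` Out \<subseteq> In" "\<forall>x\<in>Out. \<tau> (\<mu> x) \<le> \<tau> x"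
    using matching[OF finOut] finIn by blast
  define J where "J = {j. j < k \<and> Out \<inter> As' j \<noteq> {}}"
  define bst where "bst = (\<lambda>j. SOME b. b \<in> Out \<inter> As' j \<and> (\<forall>b'\<in>Out \<inter> As' j. \<tau> b \<le> \<tau> b'))"
  have bst: "bst j \<in> Out \<inter> As' j \<and> (\<forall>b'\<in>Out \<inter> As' j. \<tau> (bst j) \<le> \<tau> b')" if "j \<in> J" for j
  proof -
    have "\<exists>b\<in>Out \<inter> As' j. \<forall>b'\<in>Out \<inter> As' j. \<tau> b \<le> \<tau> b'"
      using that finOut unfolding J_def by (intro exists_min) auto
    then show ?thesis unfolding bst_def by (rule someI_ex[of "\<lambda>b. b \<in> Out \<inter> As' j \<and> (\<forall>b'\<in>Out \<inter> As' j. \<tau> b \<le> \<tau> b')", OF bexE]) blast+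
  qed
  define g where "g = (\<lambda>j. \<mu> (bst j))"
  have gIn: "g j \<in> In" if "j \<in> J" for j using bst[OF that] mu(2) unfolding g_def by auto
  have gle: "\<forall>b\<in>Out \<inter> As' j. \<tau> (g j) \<le> \<tau> b" if "j \<in> J" for j
    using bst[OF that] mu(3) unfolding g_def by (meson IntE le_trans)
  have ginj: "inj_on g J"
  proof (rule inj_onI)
    fix i j assume ij: "i \<in> J" "j \<in> J" "g i = g j"
    then have "bst i = bst j" using mu(1) bst unfolding g_def inj_on_def by blast
    moreover have "bst i \<in> As' i" "bst j \<in> As' j" using bst[OF ij(1)] bst[OF ij(2)] by auto
    ultimately have "bst i \<in> As' i \<inter> As' j" by simp
    then show "i = j" using IH2 ij unfolding J_def by blast
  qed
  define c where "c = min k (card In)"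
  have finJ: "finite J" unfolding J_def by simp
  have cJIn: "card J \<le> card In" using card_inj_on_le[OF ginj _ finIn] gIn by blast
  have Jk: "J \<subseteq> {..<k}" unfolding J_def by auto
  then have cJk: "card J \<le> k" by (metis card_lessThan card_mono finite_lessThan)
  have cJ: "card J \<le> c" unfolding c_def using cJIn cJk by simp
  have "card ({..<k} - J) = k - card J" using Jk by (simp add: card_Diff_subset finJ)
  then have "c - card J \<le> card ({..<k} - J)" unfolding c_def by simp
  then obtain E where E: "E \<subseteq> {..<k} - J" "card E = c - card J" "finite E"
    by (rule obtain_subset_with_card_n)
  have "card (In - g ` J) = card In - card J"
    using gIn finIn ginj by (simp add: card_Diff_subset card_image finJ image_subset_iff)
  then have "card E \<le> card (In - g ` J)" using E(2) unfolding c_def by simp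
  then obtain h where h: "h ` E \<subseteq> In - g ` J" "inj_on h E"
    using card_le_inj[OF E(3)] finIn by blast
  define D where "D = J \<union> E"
  define G where "G = (\<lambda>j. if j \<in> J then g j else h j)"
  have JE: "J \<inter> E = {}" using E by auto
  have GIn: "G j \<in> In" if "j \<in> D" for j using that gIn h unfolding G_def D_def by auto
  have Ginj: "inj_on G D"
  proof (rule inj_onI)
    fix i j assume ij: "i \<in> D" "j \<in> D" "G i = G j"
    show "i = j"
    proof (cases "i \<in> J"; cases "j \<in> J")
      assume "i \<in> J" "j \<in> J" then show ?thesis using ij ginj unfolding G_def inj_on_def by auto
    next
      assume a: "i \<in> J" "j \<notin> J"
      then have "j \<in> E" using ij unfolding D_def by auto
      then show ?thesis using a ij h unfolding G_def by auto
    next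
      assume a: "i \<notin> J" "j \<in> J"
      then have "i \<in> E" using ij unfolding D_def by auto
      then show ?thesis using a ij h unfolding G_def by auto
    next
      assume a: "i \<notin> J" "j \<notin> J"
      then have "i \<in> E" "j \<in> E" using ij unfolding D_def by auto
      then show ?thesis using a ij h unfolding G_def inj_on_def by auto
    qed
  qed
  have cD: "card D = c" unfolding D_def using JE finJ E cJ by (simp add: card_Un_disjoint)
  have Dk: "D \<subseteq> {..<k}" using Jk E unfolding D_def by auto
  define Vs where "Vs = (\<lambda>j. if j \<in> D then insert v (Vs' j) else Vs' j)"
  define As where "As = (\<lambda>j. if j \<in> D then insert (G j) (As' j) else As' j)"
  have trgV: "\<forall>a\<in>A. trg a \<in> V" using ends by blast
  have good1: "good V s A src trg \<tau> (Vs j) (As j)" if j: "j < k" for j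
  proof (cases "j \<in> D")
    case True
    have a0: "G j \<in> A" "trg (G j) = v" "src (G j) = s" using GIn[OF True] vsrc unfolding In_def by auto
    have "\<forall>b\<in>{b\<in>A. src b = v} \<inter> As' j. \<tau> (G j) \<le> \<tau> b"
    proof (cases "j \<in> J")
      case True then show ?thesis using gle[OF True] unfolding G_def Out_def by simp
    next
      case False then have "Out \<inter> As' j = {}" using j unfolding J_def by auto
      then show ?thesis unfolding Out_def by auto
    qed
    then show ?thesis using lift_b[OF IH1[rule_format, OF j, unfolded V'_def A'_def In_def src'_def] trgV sV vV a0]
      True unfolding Vs_def As_def by simp
  next
    case False
    then have "j \<notin> J" unfolding D_def by simp
    then have "Out \<inter> As' j = {}" using j unfolding J_def by auto
    then show ?thesis using lift_a[OF IH1[rule_format, OF j, unfolded V'_def A'_def In_def src'_def] trgV sV vV]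
      False unfolding Vs_def As_def Out_def by simp
  qed
  have As'A': "As' j \<subseteq> A'" if "j < k" for j using IH1 that unfolding good_def by blast
  have Vs'V': "Vs' j \<subseteq> V'" if "j < k" for j using IH1 that unfolding good_def by blast
  have disj: "As i \<inter> As j = {}" if ij: "i < k" "j < k" "i \<noteq> j" for i j
  proof -
    have "As' i \<inter> As' j = {}" using IH2 ij by blast
    moreover have "G i \<notin> As' j" if "i \<in> D" using GIn[OF that] As'A'[OF ij(2)] unfolding A'_def by auto
    moreover have "G j \<notin> As' i" if "j \<in> D" using GIn[OF that] As'A'[OF ij(1)] unfolding A'_def by auto
    moreover have "G i \<noteq> G j" if "i \<in> D" "j \<in> D" using Ginj that ij(3) unfolding inj_on_def by blast
    ultimately show ?thesis unfolding As_def by auto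
  qed
  have cnt: "card {i. i < k \<and> w \<in> Vs i} = min k (in_degree A trg w)" if w: "w \<in> V" for w
  proof (cases "w = v")
    case True
    have "{i. i < k \<and> w \<in> Vs i} = D" using True Dk Vs'V' unfolding Vs_def V'_def by auto
    then show ?thesis using cD unfolding c_def in_degree_def In_def True by simp
  next
    case False
    then have wV': "w \<in> V'" using w unfolding V'_def by simp
    have "{i. i < k \<and> w \<in> Vs i} = {i. i < k \<and> w \<in> Vs' i}" using False unfolding Vs_def by auto
    moreover have "in_degree A' trg w = in_degree A trg w"
      unfolding in_degree_def A'_def In_def using False by (intro arg_cong[where f = card]) auto
    ultimately show ?thesis using IH3 wV' by simp
  qed
  show ?case using good1 disj cnt by blast
qed


lemma K_bound:
  assumes finA: "finite A"
    and P: "\<forall>i<m. is_path src trg A s v (P i) \<and> tau_respecting \<tau> (P i)"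
    and D: "\<forall>i<m. \<forall>j<m. i \<noteq> j \<longrightarrow> set (P i) \<inter> set (P j) = {}"
  shows "m \<le> in_degree A trg v"
proof -
  define f where "f = (\<lambda>i. last (P i))"
  have inj: "inj_on f {..<m}"
  proof (rule inj_onI)
    fix i j assume ij: "i \<in> {..<m}" "j \<in> {..<m}" "f i = f j"
    show "i = j"
    proof (rule ccontr)
      assume "i \<noteq> j"
      moreover have "last (P i) \<in> set (P i)" "last (P j) \<in> set (P j)"
        using P ij unfolding is_path_def by auto
      ultimately show False using D ij unfolding f_def by auto
    qed
  qed
  have "f ` {..<m} \<subseteq> {a\<in>A. trg a = v}"
  proof
    fix x assume "x \<in> f ` {..<m}"
    then obtain i where i: "i < m" "x = last (P i)" unfolding f_def by auto
    then have "is_path src trg A s v (P i)" using P by blast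
    then show "x \<in> {a\<in>A. trg a = v}" using i unfolding is_path_def by (auto intro: last_in_set)
  qed
  then have "card {..<m} \<le> card {a\<in>A. trg a = v}" using card_inj_on_le[OF inj] finA by simp
  then show ?thesis unfolding in_degree_def by simp
qed

theorem mainTheorem2:
  fixes V :: "'v set" and s :: 'v and A :: "'e set"
    and src trg :: "'e \<Rightarrow> 'v" and \<tau> :: "'e \<Rightarrow> nat" and k :: nat
  assumes "temporal_network V s A src trg"
    and "acyclic_arcs src trg A"
    and "pre_flow V A src trg \<tau>"
  shows "(\<forall>v\<in>V. min k (lambda_N A src trg \<tau> s v) = min k (in_degree A trg v)) \<and>
         (\<exists>Vs :: nat \<Rightarrow> 'v set. \<exists>As :: nat \<Rightarrow> 'e set.
            (\<forall>i<k. s_arborescence V s A src trg (Vs i) (As i) \<and>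
                   tau_respecting_arb s src trg \<tau> (Vs i) (As i)) \<and>
            (\<forall>i<k. \<forall>j<k. i \<noteq> j \<longrightarrow> As i \<inter> As j = {}) \<and>
            (\<forall>v\<in>V. card {i. i < k \<and> v \<in> Vs i} = min k (lambda_N A src trg \<tau> s v)))"
proof -
  obtain Vs As where G: "(\<forall>i<k. good V s A src trg \<tau> (Vs i) (As i)) \<and>
     (\<forall>i<k. \<forall>j<k. i \<noteq> j \<longrightarrow> As i \<inter> As j = {}) \<and>
     (\<forall>v\<in>V. card {i. i < k \<and> v \<in> Vs i} = min k (in_degree A trg v))"
    using core[OF refl assms, where k=k] by (elim exE) blast
  have G1: "\<forall>i<k. good V s A src trg \<tau> (Vs i) (As i)" using G by (rule conjunct1)
  have G2: "\<forall>i<k. \<forall>j<k. i \<noteq> j \<longrightarrow> As i \<inter> As j = {}" using G by (elim conjE)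
  have G3: "\<forall>v\<in>V. card {i. i < k \<and> v \<in> Vs i} = min k (in_degree A trg v)" using G by (elim conjE)
  have finA: "finite A" and finV: "finite V" using assms(1) unfolding temporal_network_def by auto
  have lam: "min k (lambda_N A src trg \<tau> s v) = min k (in_degree A trg v)" if vV: "v \<in> V" for v
  proof -
    define K where "K = {k. \<exists>P :: nat \<Rightarrow> 'e list.
       (\<forall>i<k. is_path src trg A s v (P i) \<and> tau_respecting \<tau> (P i)) \<and>
       (\<forall>i<k. \<forall>j<k. i \<noteq> j \<longrightarrow> set (P i) \<inter> set (P j) = {})}"
    have L: "lambda_N A src trg \<tau> s v = Max K" unfolding lambda_N_def K_def by simp
    have Kb: "m \<le> in_degree A trg v" if "m \<in> K" for m
      using that unfolding K_def mem_Collect_eq by (elim exE conjE) (rule K_bound[OF finA])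
    have "K \<subseteq> {..in_degree A trg v}" using Kb by auto
    then have finK: "finite K" by (rule finite_subset) simp
    have "0 \<in> K" unfolding K_def by auto
    then have Lle: "Max K \<le> in_degree A trg v" using finK Kb by (subst Max_le_iff) auto
    define S where "S = {i. i < k \<and> v \<in> Vs i}"
    have finS: "finite S" unfolding S_def by simp
    obtain f where f: "bij_betw f {0..<card S} S" using ex_bij_betw_nat_finite[OF finS] by blast
    define P where "P = (\<lambda>i. SOME p. is_path src trg (As (f i)) s v p)"
    have Pp: "is_path src trg (As (f i)) s v (P i)" if "i < card S" for i
    proof -
      have fi: "f i \<in> S" using f that unfolding bij_betw_def by auto
      then have "\<exists>p. is_path src trg (As (f i)) s v p"
        using good_path[OF assms(2) _ finV] G1 unfolding S_def by blast
      then show ?thesis unfolding P_def by (rule someI_ex)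
    qed
    have "card S \<in> K" unfolding K_def
    proof (intro CollectI exI[of _ P] conjI allI impI)
      fix i assume i: "i < card S"
      have fi: "f i < k" using f i unfolding bij_betw_def S_def by auto
      have sub: "As (f i) \<subseteq> A" using G1 fi unfolding good_def by blast
      show "is_path src trg A s v (P i)" using Pp[OF i] sub unfolding is_path_def by blast
      show "tau_respecting \<tau> (P i)" using good_sorted[OF _ Pp[OF i]] G1 fi by blast
    next
      fix i j assume ij: "i < card S" "j < card S" "i \<noteq> j"
      have "f i \<noteq> f j" using f ij unfolding bij_betw_def inj_on_def by auto
      moreover have "f i < k" "f j < k" using f ij unfolding bij_betw_def S_def by auto
      ultimately have "As (f i) \<inter> As (f j) = {}" using G2 by blast
      moreover have "set (P i) \<subseteq> As (f i)" "set (P j) \<subseteq> As (f j)"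
        using Pp ij unfolding is_path_def by auto
      ultimately show "set (P i) \<inter> set (P j) = {}" by blast
    qed
    then have "card S \<le> Max K" using finK by simp
    moreover have "card S = min k (in_degree A trg v)" using G3 vV unfolding S_def by simp
    ultimately show ?thesis using L Lle by linarith
  qed
  show ?thesis
  proof (intro conjI)
    show "\<forall>v\<in>V. min k (lambda_N A src trg \<tau> s v) = min k (in_degree A trg v)" using lam by blast
    show "\<exists>Vs :: nat \<Rightarrow> 'v set. \<exists>As :: nat \<Rightarrow> 'e set.
            (\<forall>i<k. s_arborescence V s A src trg (Vs i) (As i) \<and>
                   tau_respecting_arb s src trg \<tau> (Vs i) (As i)) \<and>
            (\<forall>i<k. \<forall>j<k. i \<noteq> j \<longrightarrow> As i \<inter> As j = {}) \<and>
            (\<forall>v\<in>V. card {i. i < k \<and> v \<in> Vs i} = min k (lambda_N A src trg \<tau> s v))"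
      using G1 G2 G3 lam good_arb[OF assms(2)] by (intro exI[of _ Vs] exI[of _ As]) auto
  qed
qed

end
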